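(* Let $R$ be a principal Artinian ring, let $f, g \in R[x]$ with $g$ of positive degree and invertible leading coefficient, let $c = c(f)$ be a generator of the content ideal of $f$, and let $h \in R[x]$ satisfy $f = c\cdot h$. Put $\bar R = R/\mathrm{Ann}(c)$ and let $\bar h, \bar g$ be the images of $h, g$ in $\bar R[x]$. Then $$\mathrm{Rres}_R(f,g) = \{\, c s : s \in R,\ (s \bmod \mathrm{Ann}(c)) \in \mathrm{Rres}_{\bar R}(\bar h, \bar g)\,\},$$ i.e. $\mathrm{rres}_R(f,g) = c\cdot \mathrm{rres}_{R/\mathrm{Ann}(c)}(h,g)$.
   Context: A principal Artinian ring is a commutative ring with identity in which every ideal is principal and which satisfies the descending chain condition on ideals. For $f = \sum a_i x^i$, the content ideal is $C(f) = (a_0,\dots,a_d)$ and $c(f)$ is any generator of it. $\mathrm{Ann}(c) = \{s \in R : sc = 0\}$. For a commutative ring $S$ and $f,g\in S[x]$, $\mathrm{Rres}_S(f,g) = (f,g)\cap S$, where $(f,g)$ is the ideal of $S[x]$ generated by $f,g$; $\mathrm{rres}_S(f,g)$ denotes a generator of it (for a quotient ring, a lift of a generator to $R$). *)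

theory Defs
  imports "HOL-Computational_Algebra.Polynomial"
begin

definition is_ideal :: "'a::comm_ring_1 set \<Rightarrow> bool" where
  "is_ideal I \<longleftrightarrow> 0 \<in> I \<and> (\<forall>x\<in>I. \<forall>y\<in>I. x + y \<in> I) \<and> (\<forall>x\<in>I. \<forall>r. r * x \<in> I)"

definition ideal_gen :: "'a::comm_ring_1 set \<Rightarrow> 'a set" where
  "ideal_gen S = \<Inter>{I. is_ideal I \<and> S \<subseteq> I}"

definition principal_ring :: "'a::comm_ring_1 itself \<Rightarrow> bool" where
  "principal_ring _ \<longleftrightarrow> (\<forall>I::'a set. is_ideal I \<longrightarrow> (\<exists>a. I = ideal_gen {a}))"

definition artinian_ring :: "'a::comm_ring_1 itself \<Rightarrow> bool" where
  "artinian_ring _ \<longleftrightarrow> \<not> (\<exists>F :: nat \<Rightarrow> 'a set. \<forall>n. is_ideal (F n) \<and> F (Suc n) \<subset> F n)"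

definition principal_artinian_ring :: "'a::comm_ring_1 itself \<Rightarrow> bool" where
  "principal_artinian_ring T \<longleftrightarrow> principal_ring T \<and> artinian_ring T"

definition content_ideal :: "'a::comm_ring_1 poly \<Rightarrow> 'a set" where
  "content_ideal f = ideal_gen {coeff f i | i. i \<le> degree f}"

definition Ann :: "'a::comm_ring_1 \<Rightarrow> 'a set" where
  "Ann c = {s. s * c = 0}"

text \<open>Rres_R(f,g) = (f,g) \<inter> R, with R identified with the constant polynomials.\<close>
definition Rres :: "'a::comm_ring_1 poly \<Rightarrow> 'a poly \<Rightarrow> 'a set" where
  "Rres f g = {s. \<exists>u v. u * f + v * g = [:s:]}"

text \<open>For an ideal I of R: the set of s \<in> R whose residue s mod I lies in
  Rres_{R/I}(f mod I, g mod I).  Since every polynomial over R/I lifts to R[x],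
  this means: there are u, v \<in> R[x] with u f + v g \<equiv> s coefficientwise mod I.\<close>
definition Rres_mod :: "'a::comm_ring_1 set \<Rightarrow> 'a poly \<Rightarrow> 'a poly \<Rightarrow> 'a set" where
  "Rres_mod I f g = {s. \<exists>u v. \<forall>i. coeff (u * f + v * g - [:s:]) i \<in> I}"

end

theory Submission
  imports Defs
begin

lemma smult_sum_right: "finite S \<Longrightarrow> smult c (\<Sum>i\<in>S. p i) = (\<Sum>i\<in>S. smult c (p i))"
  by (induct rule: finite_induct) (simp_all add: smult_add_right)

lemma key_v:
  fixes v g p :: "'a::comm_ring_1 poly" and c :: 'a
  assumes dg: "degree g > 0" and lc: "lead_coeff g dvd 1"
    and vg: "v * g = [:t:] - smult c p"
  shows "\<forall>i. \<exists>w. coeff v i = c * w"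
proof (rule ccontr)
  assume "\<not> (\<forall>i. \<exists>w. coeff v i = c * w)"
  define S where "S = {i. \<not> (\<exists>w. coeff v i = c * w)}"
  have Sne: "S \<noteq> {}" using \<open>\<not> _\<close> S_def by auto
  have Sfin: "finite S"
  proof -
    have "S \<subseteq> {..degree v}"
    proof
      fix i assume "i \<in> S"
      hence "\<not> (\<exists>w. coeff v i = c * w)" by (simp add: S_def)
      hence "coeff v i \<noteq> c * 0" by blast
      hence "coeff v i \<noteq> 0" by simp
      hence "i \<le> degree v" using le_degree by blast
      thus "i \<in> {..degree v}" by simp
    qed
    thus ?thesis by (rule finite_subset) simp
  qed
  define k where "k = Max S"
  have kS: "k \<in> S" using Sfin Sne k_def by simp
  have above: "\<And>i. i > k \<Longrightarrow> \<exists>w. coeff v i = c * w"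
  proof (rule ccontr)
    fix i assume "k < i" "\<not> (\<exists>w. coeff v i = c * w)"
    hence "i \<in> S" by (simp add: S_def)
    hence "i \<le> k" using Sfin k_def by simp
    thus False using \<open>k < i\<close> by simp
  qed
  have "\<forall>i. \<exists>w. k < i \<longrightarrow> coeff v i = c * w" using above by blast
  hence "\<exists>W. \<forall>i. k < i \<longrightarrow> coeff v i = c * W i" by (rule choice)
  then obtain W where W0: "\<forall>i. k < i \<longrightarrow> coeff v i = c * W i" by blast
  have W: "\<And>i. i > k \<Longrightarrow> coeff v i = c * W i" using W0 by blast
  define n where "n = degree g"
  define m where "m = k + n"
  have "coeff (v * g) m = (\<Sum>i\<le>m. coeff v i * coeff g (m - i))"
    by (simp add: coeff_mult)
  also have "\<dots> = (\<Sum>i\<in>{..<k} \<union> {k} \<union> {k<..m}. coeff v i * coeff g (m - i))"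
    by (rule sum.cong) (auto simp: m_def)
  also have "\<dots> = (\<Sum>i<k. coeff v i * coeff g (m - i)) + coeff v k * coeff g n
       + (\<Sum>i\<in>{k<..m}. coeff v i * coeff g (m - i))"
  proof -
    have d1: "({..<k} \<union> {k}) \<inter> {k<..m} = {}" by auto
    have d2: "{..<k} \<inter> {k} = {}" by auto
    have "(\<Sum>i\<in>{..<k} \<union> {k} \<union> {k<..m}. coeff v i * coeff g (m - i))
       = (\<Sum>i\<in>{..<k} \<union> {k}. coeff v i * coeff g (m - i)) + (\<Sum>i\<in>{k<..m}. coeff v i * coeff g (m - i))"
      by (rule sum.union_disjoint[OF _ _ d1]) auto
    also have "(\<Sum>i\<in>{..<k} \<union> {k}. coeff v i * coeff g (m - i))
       = (\<Sum>i<k. coeff v i * coeff g (m - i)) + (\<Sum>i\<in>{k}. coeff v i * coeff g (m - i))"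
      by (rule sum.union_disjoint[OF _ _ d2]) auto
    finally have X: "(\<Sum>i\<in>{..<k} \<union> {k} \<union> {k<..m}. coeff v i * coeff g (m - i)) =
      (\<Sum>i<k. coeff v i * coeff g (m - i)) + (\<Sum>i\<in>{k}. coeff v i * coeff g (m - i))
       + (\<Sum>i\<in>{k<..m}. coeff v i * coeff g (m - i))" .
    have mk: "m - k = n" by (simp add: m_def)
    show ?thesis unfolding X by (simp add: mk)
  qed
  also have "(\<Sum>i<k. coeff v i * coeff g (m - i)) = 0"
    by (rule sum.neutral) (auto simp: m_def n_def coeff_eq_0)
  also have "(\<Sum>i\<in>{k<..m}. coeff v i * coeff g (m - i)) = c * (\<Sum>i\<in>{k<..m}. W i * coeff g (m - i))"
    by (simp add: sum_distrib_left W mult.assoc)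
  finally have e1: "coeff (v * g) m = coeff v k * lead_coeff g + c * (\<Sum>i\<in>{k<..m}. W i * coeff g (m - i))"
    by (simp add: n_def)
  have "m > 0" using dg by (simp add: m_def n_def)
  hence "coeff (v * g) m = c * (- coeff p m)" using vg by (simp add: coeff_pCons split: nat.splits)
  with e1 have "coeff v k * lead_coeff g = c * (- coeff p m - (\<Sum>i\<in>{k<..m}. W i * coeff g (m - i)))"
    by (simp add: algebra_simps)
  moreover obtain e where e: "1 = lead_coeff g * e" using lc by (erule dvdE)
  ultimately have CK: "coeff v k = c * ((- coeff p m - (\<Sum>i\<in>{k<..m}. W i * coeff g (m - i))) * e)"
  proof -
    assume A: "coeff v k * lead_coeff g = c * (- coeff p m - (\<Sum>i\<in>{k<..m}. W i * coeff g (m - i)))"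
    have "coeff v k = coeff v k * (lead_coeff g * e)" using e by simp
    also have "\<dots> = (coeff v k * lead_coeff g) * e" by (simp only: mult.assoc)
    finally show ?thesis using A by (simp only: mult.assoc)
  qed
  have NK: "\<not> (\<exists>w. coeff v k = c * w)" using kS unfolding S_def by simp
  have EX: "\<exists>w. coeff v k = c * w" using CK by (rule exI)
  show False using NK EX by (rule notE)
qed

theorem lemma5p2:
  fixes f g h :: "'a::comm_ring_1 poly" and c :: 'a
  assumes "principal_artinian_ring TYPE('a)"
    and "degree g > 0"
    and "lead_coeff g dvd 1"
    and "ideal_gen {c} = content_ideal f"
    and "f = smult c h"
  shows "Rres f g = {c * s | s. s \<in> Rres_mod (Ann c) h g}"
proof
  show "Rres f g \<subseteq> {c * s | s. s \<in> Rres_mod (Ann c) h g}"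
  proof
    fix t assume "t \<in> Rres f g"
    then obtain u v where uv: "u * f + v * g = [:t:]" by (auto simp: Rres_def)
    have vg: "v * g = [:t:] - smult c (u * h)" using uv assms(5)
      by (simp add: algebra_simps)
    have "\<forall>i. \<exists>w. coeff v i = c * w" by (rule key_v[OF assms(2,3) vg])
    hence "\<exists>wf. \<forall>i. coeff v i = c * wf i" by (rule choice)
    then obtain wf where wf0: "\<forall>i. coeff v i = c * wf i" by blast
    have wf: "\<And>i. coeff v i = c * wf i" using wf0 by blast
    define w where "w = (\<Sum>i\<le>degree v. monom (wf i) i)"
    have "smult c w = (\<Sum>i\<le>degree v. monom (coeff v i) i)"
      unfolding w_def by (simp add: smult_sum_right smult_monom wf)
    also have "\<dots> = v" by (rule poly_as_sum_of_monoms)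
    finally have vw: "v = smult c w" by simp
    have E: "smult c (u * h + w * g) = [:t:]" using uv assms(5) vw
      by (simp add: algebra_simps smult_add_right)
    define s0 where "s0 = coeff (u * h + w * g) 0"
    have ts: "t = c * s0" using arg_cong[OF E, of "\<lambda>p. coeff p 0"] by (simp add: s0_def)
    have "smult c (u * h + w * g - [:s0:]) = 0" using E ts
      by (simp add: smult_diff_right)
    hence "\<forall>i. coeff (u * h + w * g - [:s0:]) i \<in> Ann c"
    proof (intro allI)
      fix i
      have "c * coeff (u * h + w * g - [:s0:]) i = 0"
        using arg_cong[OF \<open>smult c (u * h + w * g - [:s0:]) = 0\<close>, of "\<lambda>p. coeff p i"] by simp
      thus "coeff (u * h + w * g - [:s0:]) i \<in> Ann c" by (simp add: Ann_def mult.commute)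
    qed
    hence "s0 \<in> Rres_mod (Ann c) h g" by (auto simp: Rres_mod_def)
    thus "t \<in> {c * s | s. s \<in> Rres_mod (Ann c) h g}" using ts by blast
  qed
next
  show "{c * s | s. s \<in> Rres_mod (Ann c) h g} \<subseteq> Rres f g"
  proof
    fix t assume "t \<in> {c * s | s. s \<in> Rres_mod (Ann c) h g}"
    then obtain s u v where ts: "t = c * s" and
      A: "\<forall>i. coeff (u * h + v * g - [:s:]) i \<in> Ann c"
      by (auto simp: Rres_mod_def)
    have "smult c (u * h + v * g - [:s:]) = 0"
      by (rule poly_eqI) (use A in \<open>auto simp: Ann_def mult.commute\<close>)
    hence "u * f + smult c v * g = [:t:]" using assms(5) ts
      by (simp add: algebra_simps smult_diff_right smult_add_right)
    thus "t \<in> Rres f g" unfolding Rres_def by blast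
  qed
qed

end
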